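(* Let $(r_i)_{i\in\mathbb{N}_0}\subseteq\mathbb{N}$ be a sequence of natural numbers. Then there exist a sequence $(c_i)_{i\in\mathbb{N}_0}\subseteq(0,\infty)$ and a sequence $(k_i)_{i\in\mathbb{N}_0}\subseteq\mathbb{N}$ such that $T=\sum_{i\in\mathbb{N}_0}p_i\cdot\partial_x^i$ with $p_{2i}(x)=c_i+x^{2k_ir_i}$ and $p_{2i+1}(x)=0$ for all $i\in\mathbb{N}_0$ is a positivity preserver on $\mathbb{R}[x]$.
   Context: A linear map $T:\mathbb{R}[x]\to\mathbb{R}[x]$ is a positivity preserver if it maps every polynomial that is non-negative on $\mathbb{R}$ to a polynomial that is non-negative on $\mathbb{R}$. The operator $\sum_i p_i\partial_x^i$ acts on each polynomial as a finite sum. *)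

theory Defs
  imports "HOL-Computational_Algebra.Polynomial"
begin

definition nonneg_poly :: "real poly \<Rightarrow> bool" where
  "nonneg_poly f \<longleftrightarrow> (\<forall>x. 0 \<le> poly f x)"

definition positivity_preserver :: "(real poly \<Rightarrow> real poly) \<Rightarrow> bool" where
  "positivity_preserver T \<longleftrightarrow> (\<forall>f. nonneg_poly f \<longrightarrow> nonneg_poly (T f))"

text \<open>The differential operator sum_i p_i * d^i acting on f; the sum is finite
  since the i-th derivative of f vanishes for i > degree f.\<close>
definition diff_op :: "(nat \<Rightarrow> real poly) \<Rightarrow> real poly \<Rightarrow> real poly" where
  "diff_op p f = (\<Sum>i\<le>degree f. p i * (pderiv ^^ i) f)"

end

theory Submission
  imports Defs "HOL-Computational_Algebra.Fundamental_Theorem_Algebra"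
begin

inductive sos :: "real poly \<Rightarrow> bool" where
  sos0: "sos 0"
| sosq: "sos (q * q)"
| sosadd: "sos p \<Longrightarrow> sos q \<Longrightarrow> sos (p + q)"

lemma sos_mult_sq: "sos p \<Longrightarrow> sos (r * r * p)"
proof (induction rule: sos.induct)
  case sos0 then show ?case by (simp add: sos.sos0)
next
  case (sosq q)
  have "r * r * (q * q) = (r * q) * (r * q)" by (simp add: algebra_simps)
  then show ?case by (metis sos.sosq)
next
  case (sosadd p q)
  then show ?case by (simp add: distrib_left sos.sosadd)
qed

lemma cont_right:
  fixes p :: "real poly"
  assumes "\<forall>x>t. poly p x \<ge> 0" shows "poly p t \<ge> 0"
proof -
  have "((\<lambda>x. poly p x) \<longlongrightarrow> poly p t) (at_right t)"
    using poly_isCont[where p=p and x=t] by (simp add: isCont_def filterlim_at_split)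
  moreover have "\<forall>\<^sub>F x in at_right t. 0 \<le> poly p x"
    using eventually_at_right_less[of t] by eventually_elim (use assms in auto)
  ultimately show ?thesis by (rule tendsto_lowerbound) simp
qed

lemma cont_left:
  fixes p :: "real poly"
  assumes "\<forall>x<t. poly p x \<ge> 0" shows "poly p t \<ge> 0"
proof -
  have "((\<lambda>x. poly p x) \<longlongrightarrow> poly p t) (at_left t)"
    using poly_isCont[where p=p and x=t] by (simp add: isCont_def filterlim_at_split)
  moreover have "\<forall>\<^sub>F x in at_left t. 0 \<le> poly p x"
    using eventually_at_left_real[of "t - 1" t, simplified] by eventually_elim (use assms in auto)
  ultimately show ?thesis by (rule tendsto_lowerbound) simp
qed

lemma poly_map_of_real: "poly (map_poly complex_of_real p) (of_real x) = of_real (poly p x)"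
  by (induction p) (auto simp: map_poly_pCons)

lemma poly_map_of_real': "poly (map_poly complex_of_real p) z = (\<Sum>i\<le>degree p. of_real (coeff p i) * z ^ i)"
  by (simp add: poly_altdef degree_map_poly coeff_map_poly)

lemma map_of_real_mult: "map_poly complex_of_real (p * q) = map_poly of_real p * map_poly of_real q"
  by (rule poly_eqI) (simp add: coeff_map_poly coeff_mult)

lemma map_of_real_add: "map_poly complex_of_real (p + q) = map_poly of_real p + map_poly of_real q"
  by (rule poly_eqI) (simp add: coeff_map_poly)

lemma nonneg_sos_aux: "degree p = n \<Longrightarrow> (\<forall>x. poly p x \<ge> 0) \<Longrightarrow> sos p"
proof (induction n arbitrary: p rule: less_induct)
  case (less n p)
  show ?case
  proof (cases "degree p = 0")
    case True
    then obtain c where pc: "p = [:c:]" by (metis degree_eq_zeroE)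
    have "c \<ge> 0" using less.prems(2)[rule_format, of 0] pc by simp
    then have "p = [:sqrt c:] * [:sqrt c:]" using pc by simp
    then show ?thesis by (metis sos.sosq)
  next
    case False
    have "\<not> constant (poly (map_poly complex_of_real p))"
      using False by (simp add: constant_degree degree_map_poly)
    then obtain z where z: "poly (map_poly complex_of_real p) z = 0"
      using fundamental_theorem_of_algebra by blast
    show ?thesis
    proof (cases "Im z = 0")
      case True
      define t where "t = Re z"
      have "z = of_real t" using True t_def by (simp add: complex_eq_iff)
      then have pt: "poly p t = 0" using z poly_map_of_real[of p t] by simp
      then obtain p1 where p1: "p = [:-t,1:] * p1" using poly_eq_0_iff_dvd by blast
      have "\<forall>x>t. poly p1 x \<ge> 0"
      proof (intro allI impI)
        fix x assume "x > t"
        have "0 \<le> poly p x" using less.prems(2) by auto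
        also have "poly p x = (x - t) * poly p1 x" by (subst p1) (simp add: algebra_simps)
        finally show "poly p1 x \<ge> 0" using \<open>x > t\<close> by (simp add: zero_le_mult_iff)
      qed
      then have a1: "poly p1 t \<ge> 0" by (rule cont_right)
      have "\<forall>x<t. poly (-p1) x \<ge> 0"
      proof (intro allI impI)
        fix x assume "x < t"
        have "0 \<le> poly p x" using less.prems(2) by auto
        also have "poly p x = (x - t) * poly p1 x" by (subst p1) (simp add: algebra_simps)
        finally show "poly (-p1) x \<ge> 0" using \<open>x < t\<close> by (simp add: zero_le_mult_iff)
      qed
      then have "poly (-p1) t \<ge> 0" by (rule cont_left)
      with a1 have "poly p1 t = 0" by simp
      then obtain p2 where p2: "p1 = [:-t,1:] * p2" using poly_eq_0_iff_dvd by blast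
      have pp: "p = [:-t,1:] * [:-t,1:] * p2" using p1 p2 by (metis mult.assoc)
      have "p2 \<noteq> 0" using pp False by auto
      have l0: "[:-t,1:] \<noteq> (0::real poly)" by simp
      have d1: "degree ([:-t,1:] * [:-t,1:]) = 2"
        by (subst degree_mult_eq[OF l0 l0]) simp
      have "[:-t,1:] * [:-t,1:] \<noteq> (0::real poly)" using l0 by simp
      then have "degree ([:-t,1:] * [:-t,1:] * p2) = degree ([:-t,1:] * [:-t,1:]) + degree p2"
        by (rule degree_mult_eq[OF _ \<open>p2 \<noteq> 0\<close>])
      then have "degree ([:-t,1:] * [:-t,1:] * p2) = degree p2 + 2"
        using d1 by linarith
      then have dg: "degree p = degree p2 + 2" using pp by metis
      have "\<forall>x>t. poly p2 x \<ge> 0"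
      proof (intro allI impI)
        fix x assume "x > t"
        have "0 \<le> poly p x" using less.prems(2) by auto
        also have "poly p x = (x - t)^2 * poly p2 x" by (subst pp) (simp add: power2_eq_square algebra_simps)
        finally show "poly p2 x \<ge> 0" using \<open>x > t\<close> by (simp add: zero_le_mult_iff)
      qed
      then have "poly p2 t \<ge> 0" by (rule cont_right)
      have "\<forall>x. poly p2 x \<ge> 0"
      proof
        fix x show "poly p2 x \<ge> 0"
        proof (cases "x = t")
          case True then show ?thesis using \<open>poly p2 t \<ge> 0\<close> by simp
        next
          case False
          have "0 \<le> poly p x" using less.prems(2) by auto
          also have "poly p x = (x - t)^2 * poly p2 x" by (subst pp) (simp add: power2_eq_square algebra_simps)
          finally show ?thesis using False by (simp add: zero_le_mult_iff)
        qed
      qed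
      then have "sos p2" using less.IH[of "degree p2" p2] dg less.prems(1) by simp
      then show ?thesis using pp sos_mult_sq by metis
    next
      case False
      define a where "a = Re z"
      define b where "b = Im z"
      define q where "q = [:a^2 + b^2, -2*a, 1:]"
      have qz: "poly (map_poly complex_of_real q) z = 0"
        unfolding q_def a_def b_def
        by (simp add: map_poly_pCons complex_eq_iff power2_eq_square algebra_simps)
      have qx: "poly q x = (x - a)^2 + b^2" for x
        unfolding q_def by (simp add: power2_eq_square algebra_simps)
      have qpos: "poly q x > 0" for x
        using False b_def qx[of x] by (simp add: add_nonneg_pos)
      have q0: "q \<noteq> 0" unfolding q_def by simp
      have dq: "degree q = 2" unfolding q_def by simp
      define r where "r = p mod q"
      have pr: "p = q * (p div q) + r" unfolding r_def by simp
      have rdeg: "degree r \<le> 1"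
        using degree_mod_less[OF q0, of p] dq unfolding r_def by auto
      have rz: "poly (map_poly complex_of_real r) z = 0"
      proof -
        have "map_poly complex_of_real p = map_poly complex_of_real q * map_poly complex_of_real (p div q) + map_poly complex_of_real r"
          using pr by (metis map_of_real_mult map_of_real_add)
        then show ?thesis using z qz by simp
      qed
      have "poly (map_poly complex_of_real r) z = of_real (coeff r 0) + of_real (coeff r 1) * z"
        using rdeg by (simp add: poly_map_of_real')
          (cases "degree r"; simp add: coeff_eq_0)
      with rz have "of_real (coeff r 0) + of_real (coeff r 1) * z = 0" by simp
      then have "coeff r 1 * b = 0" "coeff r 0 + coeff r 1 * a = 0"
        unfolding a_def b_def by (simp_all add: complex_eq_iff)
      then have "coeff r 1 = 0" "coeff r 0 = 0" using False b_def by auto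
      then have "r = 0"
        using rdeg by (metis coeff_eq_0 le_imp_less_Suc not_less_eq_eq One_nat_def leI le_degree le_zero_eq less_one linorder_neqE_nat poly_eqI coeff_0 Suc_leI)
      then have pp: "p = q * (p div q)" using pr by simp
      define p1 where "p1 = p div q"
      have "p1 \<noteq> 0" using pp \<open>degree p \<noteq> 0\<close> p1_def by auto
      then have "degree (q * p1) = degree q + degree p1" using q0 by (rule degree_mult_eq[rotated])
      then have dg: "degree p = degree p1 + 2" using pp dq p1_def by simp
      have "\<forall>x. poly p1 x \<ge> 0"
      proof
        fix x
        have "0 \<le> poly p x" using less.prems(2) by auto
        also have "poly p x = poly q x * poly p1 x" using pp p1_def by (metis poly_mult)
        finally show "poly p1 x \<ge> 0" using qpos[of x] by (simp add: zero_le_mult_iff)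
      qed
      then have s1: "sos p1" using less.IH[of "degree p1" p1] dg less.prems(1) by simp
      have "q = [:-a,1:] * [:-a,1:] + [:b:] * [:b:]"
        unfolding q_def by (simp add: power2_eq_square algebra_simps)
      then have "p = [:-a,1:] * [:-a,1:] * p1 + [:b:] * [:b:] * p1"
        using pp p1_def by (metis distrib_right)
      then show ?thesis using s1 by (metis sos_mult_sq sos.sosadd)
    qed
  qed
qed

lemma nonneg_sos: "nonneg_poly p \<Longrightarrow> sos p"
  using nonneg_sos_aux nonneg_poly_def by blast



definition Lam :: "(nat \<Rightarrow> real) \<Rightarrow> real poly \<Rightarrow> real" where
  "Lam h P = (\<Sum>i\<le>degree P. h i * coeff P i)"

lemma Lam_ext: "degree P \<le> K \<Longrightarrow> Lam h P = (\<Sum>i\<le>K. h i * coeff P i)"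
  unfolding Lam_def
  by (rule sum.mono_neutral_left) (auto simp: coeff_eq_0)

lemma Lam_add: "Lam h (P + R) = Lam h P + Lam h R"
proof -
  define K where "K = max (degree P) (degree R)"
  have "degree (P + R) \<le> K" unfolding K_def by (rule degree_add_le) auto
  then have "Lam h (P + R) = (\<Sum>i\<le>K. h i * coeff (P + R) i)" by (rule Lam_ext)
  also have "\<dots> = (\<Sum>i\<le>K. h i * coeff P i) + (\<Sum>i\<le>K. h i * coeff R i)"
    by (simp add: algebra_simps sum.distrib)
  also have "\<dots> = Lam h P + Lam h R"
    using Lam_ext[of P K h] Lam_ext[of R K h] unfolding K_def by simp
  finally show ?thesis .
qed

lemma Lam_sq: "Lam h (Q * Q) = (\<Sum>n\<le>degree Q. \<Sum>m\<le>degree Q. h (n + m) * coeff Q n * coeff Q m)"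
proof -
  define N where "N = degree Q"
  have QQ: "Q * Q = (\<Sum>n\<le>N. \<Sum>m\<le>N. monom (coeff Q n * coeff Q m) (n + m))"
  proof -
    have "Q * Q = (\<Sum>n\<le>N. monom (coeff Q n) n) * (\<Sum>m\<le>N. monom (coeff Q m) m)"
      unfolding N_def by (simp add: poly_as_sum_of_monoms)
    also have "\<dots> = (\<Sum>n\<le>N. \<Sum>m\<le>N. monom (coeff Q n) n * monom (coeff Q m) m)"
      by (rule sum_product)
    finally show ?thesis by (simp add: mult_monom)
  qed
  have "degree (Q * Q) \<le> 2 * N" unfolding N_def
    using degree_mult_le[of Q Q] by simp
  then have "Lam h (Q * Q) = (\<Sum>i\<le>2*N. h i * coeff (Q * Q) i)" by (rule Lam_ext)
  also have "\<dots> = (\<Sum>i\<le>2*N. \<Sum>n\<le>N. \<Sum>m\<le>N. h i * (if n + m = i then coeff Q n * coeff Q m else 0))"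
    by (simp add: QQ coeff_sum sum_distrib_left)
  also have "\<dots> = (\<Sum>n\<le>N. \<Sum>m\<le>N. \<Sum>i\<le>2*N. h i * (if n + m = i then coeff Q n * coeff Q m else 0))"
    by (simp add: sum.swap[of _ "{..2*N}"])
  also have "\<dots> = (\<Sum>n\<le>N. \<Sum>m\<le>N. h (n + m) * coeff Q n * coeff Q m)"
  proof (intro sum.cong refl)
    fix n m assume "n \<in> {..N}" "m \<in> {..N}"
    then have "n + m \<in> {..2*N}" by auto
    then show "(\<Sum>i\<le>2*N. h i * (if n + m = i then coeff Q n * coeff Q m else 0)) = h (n + m) * coeff Q n * coeff Q m"
      by (simp add: if_distrib sum.delta cong: if_cong)
  qed
  finally show ?thesis unfolding N_def .
qed

lemma pair_bound:
  fixes H D1 D2 x y rho :: real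
  assumes "H^2 \<le> rho^2 * D1 * D2" "D1 \<ge> 0" "D2 \<ge> 0" "rho \<ge> 0"
  shows "H * x * y \<ge> - (rho / 2) * (D1 * x^2 + D2 * y^2)"
proof -
  define X where "X = D1 * x^2"
  define Y where "Y = D2 * y^2"
  have X0: "X \<ge> 0" "Y \<ge> 0" using assms unfolding X_def Y_def by auto
  have "(H * x * y)^2 = H^2 * (x^2 * y^2)" by (simp add: power_mult_distrib)
  also have "\<dots> \<le> rho^2 * D1 * D2 * (x^2 * y^2)"
    by (rule mult_right_mono) (use assms in auto)
  also have "\<dots> = rho^2 * (X * Y)" unfolding X_def Y_def by (simp add: algebra_simps)
  also have "\<dots> \<le> rho^2 * ((X + Y) / 2)^2"
  proof (rule mult_left_mono)
    show "X * Y \<le> ((X + Y) / 2)^2"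
      using sum_squares_ge_zero[of "X - Y" 0] by (simp add: power2_eq_square field_simps)
  qed simp
  also have "\<dots> = (rho * (X + Y) / 2)^2" by (simp add: power_mult_distrib power_divide)
  finally have sq: "\<bar>H * x * y\<bar>^2 \<le> (rho * (X + Y) / 2)^2" by simp
  have "\<bar>H * x * y\<bar> \<le> rho * (X + Y) / 2"
    by (rule power2_le_imp_le[OF sq]) (use X0 assms(4) in simp)
  then show ?thesis unfolding X_def Y_def by linarith
qed

lemma dd:
  fixes H rho :: "nat \<Rightarrow> nat \<Rightarrow> real" and b :: "nat \<Rightarrow> real"
  assumes rsym: "\<And>n m. rho n m = rho m n"
    and r0: "\<And>n m. rho n m \<ge> 0"
    and diag: "\<And>n. H n n \<ge> 0"
    and off: "\<And>n m. n \<noteq> m \<Longrightarrow> (H n m)^2 \<le> (rho n m)^2 * H n n * H m m"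
    and row: "\<And>n. (\<Sum>m\<le>N. rho n m) \<le> 1"
  shows "(\<Sum>n\<le>N. \<Sum>m\<le>N. H n m * b n * b m) \<ge> 0"
proof -
  define D where "D n = H n n * (b n)^2" for n
  define E where "E n m = (if n = m then 0 else rho n m)" for n m
  have E0: "E n m \<ge> 0" for n m unfolding E_def using r0 by simp
  have Esym: "E n m = E m n" for n m unfolding E_def using rsym by simp
  have Erow: "(\<Sum>m\<le>N. E n m) \<le> 1" for n
  proof -
    have "(\<Sum>m\<le>N. E n m) \<le> (\<Sum>m\<le>N. rho n m)"
      by (rule sum_mono) (use r0 in \<open>simp add: E_def\<close>)
    then show ?thesis using row[of n] by linarith
  qed
  have D0: "D n \<ge> 0" for n unfolding D_def using diag by simp
  have pw: "H n m * b n * b m \<ge> (if n = m then D n else 0) - E n m / 2 * (D n + D m)" for n m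
  proof (cases "n = m")
    case True then show ?thesis by (simp add: D_def E_def power2_eq_square)
  next
    case False
    have "H n m * b n * b m \<ge> - (rho n m / 2) * (H n n * (b n)^2 + H m m * (b m)^2)"
      by (rule pair_bound) (use off[OF False] diag r0 in auto)
    then show ?thesis using False by (simp add: D_def E_def)
  qed
  have s1: "(\<Sum>n\<le>N. \<Sum>m\<le>N. H n m * b n * b m) \<ge>
        (\<Sum>n\<le>N. \<Sum>m\<le>N. (if n = m then D n else 0) - E n m / 2 * (D n + D m))"
    by (intro sum_mono pw)
  have s2: "(\<Sum>n\<le>N. \<Sum>m\<le>N. (if n = m then D n else 0) - E n m / 2 * (D n + D m))
      = (\<Sum>n\<le>N. D n) - (1/2) * (\<Sum>n\<le>N. \<Sum>m\<le>N. E n m * D n) - (1/2) * (\<Sum>n\<le>N. \<Sum>m\<le>N. E n m * D m)"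
    by (simp add: sum_subtractf sum.distrib sum_distrib_left algebra_simps sum_divide_distrib add_divide_distrib)
  have s3: "(\<Sum>n\<le>N. \<Sum>m\<le>N. E n m * D m) = (\<Sum>n\<le>N. \<Sum>m\<le>N. E n m * D n)"
    by (subst sum.swap) (simp add: Esym)
  have s4: "(\<Sum>n\<le>N. D n) - (1/2) * (\<Sum>n\<le>N. \<Sum>m\<le>N. E n m * D n) - (1/2) * (\<Sum>n\<le>N. \<Sum>m\<le>N. E n m * D n)
      = (\<Sum>n\<le>N. D n * (1 - (\<Sum>m\<le>N. E n m)))"
    by (simp add: sum_subtractf sum_distrib_left sum_distrib_right algebra_simps)
  have s5: "(\<Sum>n\<le>N. D n * (1 - (\<Sum>m\<le>N. E n m))) \<ge> 0"
    by (intro sum_nonneg mult_nonneg_nonneg D0) (use Erow in \<open>auto simp: algebra_simps\<close>)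
  show ?thesis using s1 s2 s3 s4 s5 by linarith
qed



lemma fact_sq: "(fact (2*s + d) :: real)^2 \<le> fact (2*s) * fact (2*s + 2*d)"
proof (induction d)
  case 0 then show ?case by (simp add: power2_eq_square)
next
  case (Suc d)
  have e1: "fact (2*s + Suc d) = (of_nat (2*s+d+1) :: real) * fact (2*s + d)"
    by (simp add: fact_Suc)
  have e2: "fact (2*s + 2 * Suc d) = (of_nat (2*s+2*d+2) :: real) * of_nat (2*s+2*d+1) * fact (2*s + 2*d)"
    by (simp add: fact_Suc algebra_simps)
  have i1: "(of_nat (2*s+d+1) :: real)^2 \<le> of_nat (2*s+2*d+2) * of_nat (2*s+2*d+1)"
  proof -
    have "(2*s+d+1)^2 \<le> (2*s+2*d+2) * (2*s+2*d+1)"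
      by (simp add: power2_eq_square algebra_simps)
    then show ?thesis by (metis of_nat_le_iff of_nat_mult of_nat_power)
  qed
  have "(fact (2*s + Suc d) :: real)^2 = (of_nat (2*s+d+1))^2 * (fact (2*s + d))^2"
    by (simp add: e1 power_mult_distrib)
  also have "\<dots> \<le> (of_nat (2*s+2*d+2) * of_nat (2*s+2*d+1)) * (fact (2*s) * fact (2*s + 2*d))"
    by (rule mult_mono[OF i1 Suc.IH]) auto
  also have "\<dots> = fact (2*s) * fact (2*s + 2 * Suc d)"
    by (simp add: e2 algebra_simps)
  finally show ?case .
qed

definition fexp :: "nat \<Rightarrow> nat" where "fexp i = 4 * i^3 + 8 * i"

lemma fexp_ineq1:
  assumes "j \<ge> 1"
  shows "2 * fexp (s+j) + 4 * (s+j+1) \<le> fexp s + fexp (s + 2*j)"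
proof -
  have "4 * (s + j) + 4 \<le> 24 * (s + j) * j^2"
  proof -
    have "s + j \<ge> 1" using assms by simp
    have "j^2 \<ge> 1" using assms by simp
    then have h: "(s + j) * 1 \<le> (s + j) * j^2" by (rule mult_le_mono2)
    define X where "X = (s + j) * j^2"
    have h': "s + j \<le> X" using h unfolding X_def by simp
    have "4 * (s + j) + 4 \<le> 24 * X" using h' \<open>s + j \<ge> 1\<close> by simp
    then show ?thesis unfolding X_def by (metis mult.assoc)
  qed
  moreover have "fexp s + fexp (s + 2*j) = 2 * fexp (s+j) + 24 * (s+j) * j^2 - 4 * (s+j) + 4 * (s+j)"
    unfolding fexp_def by (simp add: power2_eq_square power3_eq_cube algebra_simps)
  ultimately show ?thesis by simp
qed

lemma fexp_ineq2:
  assumes "j \<ge> 1"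
  shows "8 * (s+j+1) \<le> fexp s + fexp (s + 2*j)"
  using assms unfolding fexp_def by simp

lemma key:
  fixes u :: real and L :: "nat \<Rightarrow> nat" and s j :: nat
  assumes u0: "u \<ge> 0" and j1: "j \<ge> 1" and hL: "4 * L (s+j) \<le> L (s+2*j)"
  defines "a \<equiv> \<lambda>i. (2::real)^(fexp i) + u^(L i)"
  shows "16^(s+j+1) * (a (s+j))^2 \<le> 4 * a s * a (s+2*j)"
proof -
  define k where "k = s + j"
  define t where "t = s + 2*j"
  define c where "c i = (2::real)^(fexp i)" for i
  define U where "U i = u^(L i)" for i
  define \<theta> :: real where "\<theta> = 16^(k+1)"
  have aeq: "a i = c i + U i" for i unfolding a_def c_def U_def by simp
  have c1: "c i \<ge> 1" for i unfolding c_def by simp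
  have U0: "U i \<ge> 0" for i unfolding U_def using u0 by simp
  have th: "\<theta> = 2^(4*(k+1))" unfolding \<theta>_def power_mult by simp
  have th1: "\<theta> \<ge> 1" unfolding th by (rule one_le_power) simp
  have as: "a s \<ge> 1" "a t \<ge> 1" using c1 U0 aeq by (smt (verit))+
  have cc: "\<theta> * (c k)^2 \<le> c s * c t"
  proof -
    have "\<theta> * (c k)^2 = 2^(4*(k+1) + 2 * fexp k)"
      unfolding th c_def by (simp add: power_add power_mult[symmetric] mult.commute)
    also have "\<dots> \<le> (2::real)^(fexp s + fexp t)"
      by (rule power_increasing) (use fexp_ineq1[OF j1, of s] in \<open>simp_all add: k_def t_def algebra_simps\<close>)
    also have "\<dots> = c s * c t" unfolding c_def by (simp add: power_add)
    finally show ?thesis .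
  qed
  have "c s * c t \<le> a s * a t"
    by (rule mult_mono) (use c1[of s] c1[of t] U0[of s] U0[of t] aeq[of s] aeq[of t] in auto)
  have uu: "\<theta> * (U k)^2 \<le> a s * a t"
  proof (cases "(U k)^2 \<le> \<theta>")
    case True
    have "\<theta> * (U k)^2 \<le> \<theta> * \<theta>" using True th1 by simp
    also have "\<theta> * \<theta> = 2^(8*(k+1))" unfolding th by (simp add: power_add[symmetric])
    also have "\<dots> \<le> (2::real)^(fexp s + fexp t)"
      by (rule power_increasing) (use fexp_ineq2[OF j1, of s] in \<open>simp_all add: k_def t_def\<close>)
    also have "\<dots> = c s * c t" unfolding c_def by (simp add: power_add)
    also have "\<dots> \<le> a s * a t" by fact
    finally show ?thesis .
  next
    case False
    have "u > 1"
    proof (rule ccontr)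
      assume "\<not> u > 1"
      then have "U k \<le> 1" unfolding U_def using u0 by (simp add: power_le_one)
      then have "(U k)^2 \<le> 1" using U0[of k] by (simp add: power_le_one)
      then show False using False th1 by simp
    qed
    have "\<theta> * (U k)^2 \<le> (U k)^2 * (U k)^2" using False by (intro mult_right_mono) simp_all
    also have "\<dots> = u^(4 * L k)" unfolding U_def by (simp add: power_mult[symmetric] power_add[symmetric])
    also have "\<dots> \<le> u^(L t)"
      by (rule power_increasing) (use hL \<open>u > 1\<close> in \<open>simp_all add: k_def t_def\<close>)
    also have "\<dots> = U t" unfolding U_def ..
    also have "\<dots> \<le> a t" using aeq c1[of t] by simp
    also have "\<dots> \<le> a s * a t" using as by simp
    finally show ?thesis .
  qed
  have "\<theta> * (a k)^2 \<le> \<theta> * (2 * (c k)^2 + 2 * (U k)^2)"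
  proof (rule mult_left_mono)
    show "(a k)^2 \<le> 2 * (c k)^2 + 2 * (U k)^2"
      unfolding aeq using sum_squares_ge_zero[of "c k - U k" 0] by (simp add: power2_eq_square algebra_simps)
  qed (use th1 in simp)
  also have "\<dots> = 2 * (\<theta> * (c k)^2) + 2 * (\<theta> * (U k)^2)" by (simp add: algebra_simps)
  also have "\<dots> \<le> 4 * a s * a t" using cc uu \<open>c s * c t \<le> a s * a t\<close> by linarith
  finally show ?thesis unfolding k_def t_def \<theta>_def .
qed



lemma geom_half: "(\<Sum>m\<le>N. (1/2::real)^(m+1)) = 1 - (1/2)^(N+1)"
  by (induction N) (simp_all add: field_simps)

lemma hform_nonneg:
  fixes u :: real and L :: "nat \<Rightarrow> nat"
  assumes u0: "u \<ge> 0" and hL: "\<And>k t. k < t \<Longrightarrow> 4 * L k \<le> L t"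
  defines "a \<equiv> \<lambda>i. (2::real)^(fexp i) + u^(L i)"
  defines "h \<equiv> \<lambda>i. if even i then fact i * a (i div 2) else 0"
  shows "Lam h (Q * Q) \<ge> 0"
proof -
  define H where "H n m = h (n + m)" for n m
  define rho where "rho n m = (1/2::real)^(n+m+1)" for n m
  have a0: "a i \<ge> 0" for i unfolding a_def using u0 by (simp add: add_nonneg_nonneg)
  have Hsym: "H n m = H m n" for n m unfolding H_def by (simp add: add.commute)
  have rsym: "rho n m = rho m n" for n m unfolding rho_def by (simp add: add.commute)
  have offlt: "(H n m)^2 \<le> (rho n m)^2 * H n n * H m m" if nm: "n < m" for n m
  proof (cases "even (n + m)")
    case False
    then have "H n m = 0" unfolding H_def h_def by simp
    moreover have "H n n \<ge> 0" "H m m \<ge> 0" unfolding H_def h_def using a0 by auto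
    ultimately show ?thesis by simp
  next
    case True
    then obtain j where mj: "m = n + 2 * j"
      using nm by (metis add_diff_inverse_nat dvd_def even_add even_diff_nat le_add1 less_imp_le_nat not_less)
    then have j1: "j \<ge> 1" using nm by simp
    define k where "k = n + j"
    have hk: "4 * L (n + j) \<le> L (n + 2*j)" using j1 by (intro hL) simp
    have K: "16^(n+j+1) * (a (n+j))^2 \<le> 4 * a n * a (n+2*j)"
      using key[OF u0 j1 hk] unfolding a_def by simp
    have F: "(fact (2*n + 2*j) :: real)^2 \<le> fact (2*n) * fact (2*n + 2*(2*j))"
      by (rule fact_sq)
    have Hnm: "H n m = fact (2*n + 2*j) * a (n+j)"
      unfolding H_def h_def mj by (simp add: algebra_simps)
    have Hnn: "H n n = fact (2*n) * a n" unfolding H_def h_def by (simp add: mult_2[symmetric])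
    have Hmm: "H m m = fact (2*n + 2*(2*j)) * a (n+2*j)"
      unfolding H_def h_def mj by (simp add: algebra_simps)
    have rr: "(rho n m)^2 * 16^(n+j+1) = 4"
    proof -
      have e: "(n+m+1)*2 + 2 = 4*(n+j+1)" using mj by simp
      have e1: "(2::real)^((n+m+1)*2+2) = (2^(n+m+1))^2 * 4" by (simp add: power_add power_mult power_mult_distrib)
      have e2: "(2::real)^(4*(n+j+1)) = 16^(n+j+1)" unfolding power_mult by simp
      have "(16::real)^(n+j+1) = (2^(n+m+1))^2 * 4" using e e1 e2 by metis
      then show ?thesis unfolding rho_def by (simp add: power_one_over power_divide)
    qed
    define A where "A = (a (n+j))^2"
    define B where "B = a n * a (n+2*j)"
    define F1 where "F1 = (fact (2*n + 2*j) :: real)^2"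
    define G where "G = (fact (2*n) :: real) * fact (2*n + 2*(2*j))"
    define \<theta> :: real where "\<theta> = 16^(n+j+1)"
    have th0: "\<theta> > 0" unfolding \<theta>_def by simp
    have A0: "A \<ge> 0" unfolding A_def by simp
    have rr': "(rho n m)^2 * \<theta> = 4" using rr unfolding \<theta>_def .
    have eqG: "G * (4 * B / \<theta>) = ((rho n m)^2 * \<theta>) * G * B / \<theta>" by (subst rr') simp
    have "(H n m)^2 = F1 * A" unfolding Hnm F1_def A_def by (simp add: power_mult_distrib)
    also have "\<dots> \<le> G * A" using F A0 unfolding F1_def G_def by (intro mult_right_mono) auto
    also have "\<dots> \<le> G * (4 * B / \<theta>)"
    proof (rule mult_left_mono)
      show "A \<le> 4 * B / \<theta>" using K th0 unfolding A_def B_def \<theta>_def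
        by (simp add: pos_le_divide_eq mult.commute mult.assoc)
      show "G \<ge> 0" unfolding G_def by simp
    qed
    also have "\<dots> = ((rho n m)^2 * \<theta>) * G * B / \<theta>" by (rule eqG)
    also have "\<dots> = (rho n m)^2 * H n n * H m m"
      using th0 unfolding Hnn Hmm G_def B_def by (simp add: field_simps)
    finally show ?thesis .
  qed
  have off: "(H n m)^2 \<le> (rho n m)^2 * H n n * H m m" if "n \<noteq> m" for n m
  proof (cases "n < m")
    case True then show ?thesis by (rule offlt)
  next
    case False
    then have "m < n" using that by simp
    then have "(H m n)^2 \<le> (rho m n)^2 * H m m * H n n" by (rule offlt)
    then show ?thesis using Hsym rsym by (simp add: mult_ac)
  qed
  have diag: "H n n \<ge> 0" for n unfolding H_def h_def using a0 by simp
  have row: "(\<Sum>m\<le>N. rho n m) \<le> 1" for n N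
  proof -
    have "(\<Sum>m\<le>N. rho n m) \<le> (\<Sum>m\<le>N. (1/2::real)^(m+1))"
      unfolding rho_def by (intro sum_mono power_decreasing) auto
    also have "\<dots> \<le> 1" unfolding geom_half by simp
    finally show ?thesis .
  qed
  have "(\<Sum>n\<le>degree Q. \<Sum>m\<le>degree Q. H n m * coeff Q n * coeff Q m) \<ge> 0"
    by (rule dd[OF rsym _ diag off row]) (simp add: rho_def)
  then show ?thesis unfolding Lam_sq H_def .
qed

lemma Lam_sos: "sos p \<Longrightarrow> (\<And>Q. Lam h (Q * Q) \<ge> 0) \<Longrightarrow> Lam h p \<ge> 0"
proof (induction rule: sos.induct)
  case sos0 then show ?case by (simp add: Lam_def)
next
  case (sosq q) then show ?case by simp
next
  case (sosadd p q) then show ?case by (simp add: Lam_add)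
qed

lemma coeff_pderiv_iter:
  "coeff ((pderiv ^^ i) p) j = pochhammer (of_nat (Suc j)) i * coeff p (j + i)"
proof (induction i arbitrary: p j)
  case 0 then show ?case by simp
next
  case (Suc i)
  have "coeff ((pderiv ^^ Suc i) p) j = coeff ((pderiv ^^ i) (pderiv p)) j"
    by (simp add: funpow_Suc_right del: funpow.simps)
  also have "\<dots> = pochhammer (of_nat (Suc j)) i * coeff (pderiv p) (j + i)" by (rule Suc.IH)
  also have "\<dots> = pochhammer (of_nat (Suc j)) (Suc i) * coeff p (j + Suc i)"
    by (simp add: coeff_pderiv pochhammer_Suc algebra_simps)
  finally show ?case .
qed

lemma pderiv_iter_shift:
  "(pderiv ^^ i) (pcompose f [:y, 1:]) = pcompose ((pderiv ^^ i) f) [:y, 1:]"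
  by (induction i) (simp_all add: pderiv_pcompose pderiv_pCons)

lemma eval_deriv:
  "poly ((pderiv ^^ i) f) y = fact i * coeff (pcompose f [:y, 1:]) i"
proof -
  have "poly ((pderiv ^^ i) f) y = poly (pcompose ((pderiv ^^ i) f) [:y, 1:]) 0"
    by (simp add: poly_pcompose)
  also have "\<dots> = coeff ((pderiv ^^ i) (pcompose f [:y, 1:])) 0"
    by (simp add: pderiv_iter_shift poly_0_coeff_0)
  also have "\<dots> = fact i * coeff (pcompose f [:y, 1:]) i"
    by (simp add: coeff_pderiv_iter pochhammer_fact)
  finally show ?thesis .
qed



primrec Kseq :: "(nat \<Rightarrow> nat) \<Rightarrow> nat \<Rightarrow> nat" where
  "Kseq r 0 = 1"
| "Kseq r (Suc i) = 4 * Kseq r i * r i"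

theorem proposition4p2:
  fixes r :: "nat \<Rightarrow> nat"
  assumes "\<forall>i. 1 \<le> r i"
  shows "\<exists>(c :: nat \<Rightarrow> real) (k :: nat \<Rightarrow> nat).
           (\<forall>i. 0 < c i) \<and> (\<forall>i. 1 \<le> k i) \<and>
           positivity_preserver (diff_op (\<lambda>j. if even j
               then [:c (j div 2):] + monom 1 (2 * k (j div 2) * r (j div 2))
               else 0))"
proof -
  define c :: "nat \<Rightarrow> real" where "c i = 2^(fexp i)" for i
  define k where "k = Kseq r"
  define L where "L i = k i * r i" for i
  have r1: "1 \<le> r i" for i using assms by simp
  have k1: "1 \<le> k i" for i
  proof (induction i)
    case 0 then show ?case by (simp add: k_def)
  next
    case (Suc i)
    then have "1 \<le> 4 * k i * r i" using r1[of i] by (simp add: one_le_mult_iff)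
    then show ?case by (simp add: k_def)
  qed
  have Lstep: "4 * L i \<le> L (Suc i)" for i
  proof -
    have "4 * L i * 1 \<le> 4 * L i * r (Suc i)" using r1[of "Suc i"] by (intro mult_le_mono2)
    then show ?thesis by (simp add: L_def k_def mult.assoc mult.left_commute)
  qed
  have Lmono: "L i \<le> L (Suc i)" for i using Lstep[of i] by simp
  have hL: "4 * L a \<le> L b" if "a < b" for a b
  proof -
    have "L (Suc a) \<le> L b" using that by (intro lift_Suc_mono_le[of L, OF Lmono]) simp
    then show ?thesis using Lstep[of a] by simp
  qed
  define P where "P = (\<lambda>j. if even j
               then [:c (j div 2):] + monom 1 (2 * k (j div 2) * r (j div 2))
               else (0::real poly))"
  have pp: "positivity_preserver (diff_op P)"
    unfolding positivity_preserver_def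
  proof (intro allI impI)
    fix f assume fnn: "nonneg_poly f"
    show "nonneg_poly (diff_op P f)"
      unfolding nonneg_poly_def
    proof
      fix y :: real
      define g where "g = pcompose f [:y, 1:]"
      define u where "u = y^2"
      define a where "a = (\<lambda>i. (2::real)^(fexp i) + u^(L i))"
      define h where "h = (\<lambda>i. if even i then fact i * a (i div 2) else 0)"
      have dg: "degree g = degree f" unfolding g_def by (simp add: degree_pcompose)
      have gnn: "nonneg_poly g"
        using fnn unfolding nonneg_poly_def g_def by (simp add: poly_pcompose)
      have tm: "poly (P i) y * poly ((pderiv ^^ i) f) y = h i * coeff g i" for i
      proof (cases "even i")
        case True
        have "y ^ (2 * k (i div 2) * r (i div 2)) = u ^ (L (i div 2))"
          unfolding u_def L_def by (simp add: power_mult mult.assoc)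
        then show ?thesis using True
          unfolding P_def h_def a_def c_def g_def eval_deriv by (simp add: poly_monom)
      next
        case False then show ?thesis unfolding P_def h_def by simp
      qed
      have "poly (diff_op P f) y = (\<Sum>i\<le>degree f. poly (P i) y * poly ((pderiv ^^ i) f) y)"
        unfolding diff_op_def by (simp add: poly_sum)
      also have "\<dots> = (\<Sum>i\<le>degree g. h i * coeff g i)" using tm dg by simp
      also have "\<dots> = Lam h g" unfolding Lam_def ..
      also have "\<dots> \<ge> 0"
      proof (rule Lam_sos)
        show "sos g" using gnn by (rule nonneg_sos)
        fix Q show "Lam h (Q * Q) \<ge> 0"
          unfolding h_def a_def by (rule hform_nonneg) (use hL in \<open>simp_all add: u_def\<close>)
      qed
      finally show "0 \<le> poly (diff_op P f) y" .
    qed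
  qed
  show ?thesis
    by (rule exI[of _ c], rule exI[of _ k]) (use k1 pp in \<open>simp add: c_def P_def\<close>)
qed


end
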